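(* Let $\kappa:=\frac12\operatorname{arccosh}(3/2)$ and for real $u>\kappa$ put \begin{equation*} \ell(u) := \frac{1}{2}(e^{4u}-e^{2u}-2-e^{-2u}+e^{-4u}) + \frac{e^{2u}-e^{-2u}}{2}\sqrt{(e^{2u}+e^{-2u}+1)(e^{2u}+e^{-2u}-3)}, \end{equation*} where $\sqrt{\cdot}$ is the nonnegative square root. If $u>\kappa$, then $\ell(u)$ is a real number with $\ell(u)>1$. *)

theory Defs
  imports Complex_Main
begin

definition kappa :: real where
  "kappa = arcosh (3/2) / 2"

definition ell :: "real \<Rightarrow> real" where
  "ell u = (exp (4*u) - exp (2*u) - 2 - exp (-2*u) + exp (-4*u)) / 2
     + (exp (2*u) - exp (-2*u)) / 2
       * sqrt ((exp (2*u) + exp (-2*u) + 1) * (exp (2*u) + exp (-2*u) - 3))"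

end

theory Submission
  imports Defs
begin

theorem lemma4p4:
  fixes u :: real
  assumes "u > kappa"
  shows "(exp (2*u) + exp (-2*u) + 1) * (exp (2*u) + exp (-2*u) - 3) \<ge> 0 \<and> ell u > 1"
proof -
  have a0: "arcosh (3/2::real) \<ge> 0" by simp
  have h2: "2*u > arcosh (3/2)" using assms unfolding kappa_def by simp
  have "cosh (arcosh (3/2::real)) < cosh (2*u)"
    using cosh_real_strict_mono[OF a0 h2] .
  hence c: "cosh (2*u) > 3/2" by simp
  define s where "s = exp (2*u) + exp (-2*u)"
  have s3: "s > 3" using c unfolding s_def cosh_field_def by simp
  have u0: "u > 0" using h2 a0 by linarith
  have xy: "exp (2*u) * exp (-2*u) = 1" by (simp flip: exp_add)
  have sq: "exp (4*u) + exp (-4*u) = s^2 - 2"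
  proof -
    have "exp (4*u) = exp (2*u)^2" by (simp flip: exp_of_nat_mult)
    moreover have "exp (-4*u) = exp (-2*u)^2" by (simp flip: exp_of_nat_mult)
    ultimately show ?thesis unfolding s_def using xy by (simp add: power2_eq_square algebra_simps)
  qed
  have p: "(s + 1) * (s - 3) \<ge> 0" using s3 by simp
  have d: "exp (2*u) - exp (-2*u) \<ge> 0" using u0 by simp
  have t1: "(exp (4*u) - exp (2*u) - 2 - exp (-2*u) + exp (-4*u)) / 2 = (s^2 - s - 4)/2"
  proof -
    have "exp (2*u) + exp (-2*u) = s" by (simp add: s_def)
    thus ?thesis using sq by (smt (verit))
  qed
  have t1g: "(s^2 - s - 4)/2 > 1"
  proof -
    have "s^2 - s - 6 = (s-3)*(s+2)" by (simp add: power2_eq_square algebra_simps)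
    moreover have "(s-3)*(s+2) > 0" using s3 by simp
    ultimately show ?thesis by simp
  qed
  have t2: "(exp (2*u) - exp (-2*u)) / 2 * sqrt ((s + 1) * (s - 3)) \<ge> 0"
    using d p by (intro mult_nonneg_nonneg divide_nonneg_pos) auto
  have "ell u > 1"
    unfolding ell_def using t1 t1g t2 unfolding s_def by linarith
  thus ?thesis using p unfolding s_def by simp
qed

end
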